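(* Let $\theta>0$. Let $X_1,\ldots,X_n$ be independent random variables with $P(X_i>x)=(1+x/\theta)^{-\alpha_i}$, $x>0$, $\alpha_i>0$, and $Y_1,\ldots,Y_n$ independent random variables with $P(Y_i>x)=(1+x/\theta)^{-\alpha_i^*}$, $x>0$, $\alpha_i^*>0$. Let $\underline{\alpha}=(\alpha_1,\ldots,\alpha_n)$ and $\underline{\alpha}^*=(\alpha_1^*,\ldots,\alpha_n^* )$. If $\underline{\alpha}\prec^{w}\underline{\alpha}^*$, then $X_{n:n}\leq_{rh}Y_{n:n}$.
   Context: $X_{n:n}=\max(X_1,\ldots,X_n)$. Weak supermajorization: $\underline{a}\prec^{w}\underline{b}$ means $\sum_{i=1}^k a_{i:n}\geq\sum_{i=1}^k b_{i:n}$ for all $k=1,\ldots,n$, where $a_{1:n}\leq\cdots\leq a_{n:n}$ is the increasing rearrangement of $\underline a$ (similarly for $\underline b$). $X\leq_{rh}Y$ (reversed hazard rate order) for $X\sim F$, $Y\sim G$ means $G(x)/F(x)$ is increasing in $x$ (equivalently $f/F\leq g/G$). *)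

theory Defs
  imports "HOL-Probability.Probability"
begin

text \<open>Increasing rearrangement of the vector (a 0, ..., a (n-1)) as a sorted list;
  its (k-1)-th entry is a_{k:n}.\<close>
definition incr_rearr :: "nat \<Rightarrow> (nat \<Rightarrow> real) \<Rightarrow> real list" where
  "incr_rearr n a = sort (map a [0..<n])"

definition weak_supmaj :: "nat \<Rightarrow> (nat \<Rightarrow> real) \<Rightarrow> (nat \<Rightarrow> real) \<Rightarrow> bool" where
  "weak_supmaj n a b \<longleftrightarrow>
     (\<forall>k\<in>{1..n}. sum_list (take k (incr_rearr n a)) \<ge> sum_list (take k (incr_rearr n b)))"

definition cdf_of :: "'a measure \<Rightarrow> ('a \<Rightarrow> real) \<Rightarrow> real \<Rightarrow> real" where
  "cdf_of M Z x = measure M {\<omega> \<in> space M. Z \<omega> \<le> x}"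

definition rh_le :: "'a measure \<Rightarrow> ('a \<Rightarrow> real) \<Rightarrow> 'b measure \<Rightarrow> ('b \<Rightarrow> real) \<Rightarrow> bool" where
  "rh_le M X N Y \<longleftrightarrow>
     mono_on {x. 0 < cdf_of M X x \<and> 0 < cdf_of N Y x} (\<lambda>x. cdf_of N Y x / cdf_of M X x)"

definition max_os :: "nat \<Rightarrow> (nat \<Rightarrow> 'a \<Rightarrow> real) \<Rightarrow> 'a \<Rightarrow> real" where
  "max_os n X \<omega> = Max ((\<lambda>i. X i \<omega>) ` {..<n})"

end

theory Submission
  imports Defs "HOL-Analysis.Analysis"
begin


lemma kfun_nonneg:
  fixes u :: real assumes "u \<ge> 0"
  shows "exp u * (u - 2) + u + 2 \<ge> 0"
proof -
  have "exp 0 * (0 - 2) + 0 + 2 \<le> exp u * (u - 2) + u + 2"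
  proof (rule DERIV_nonneg_imp_nondecreasing[OF assms])
    fix x :: real assume "0 \<le> x" "x \<le> u"
    have d: "DERIV (\<lambda>x. exp x * (x - 2) + x + 2) x :> exp x * (x - 2) + exp x + 1"
      by (auto intro!: derivative_eq_intros)
    have "exp (-x) \<ge> 1 - x" using exp_ge_add_one_self[of "-x"] by simp
    hence "exp x * exp (-x) \<ge> exp x * (1 - x)" by (simp add: mult_left_mono)
    hence "1 \<ge> exp x * (1 - x)" by (simp add: exp_minus)
    hence "exp x * (x - 2) + exp x + 1 \<ge> 0" by (simp add: algebra_simps)
    with d show "\<exists>y. DERIV (\<lambda>x. exp x * (x - 2) + x + 2) x :> y \<and> y \<ge> 0" by blast
  qed
  thus ?thesis by simp
qed

definition pf :: "real \<Rightarrow> real" where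
  "pf u = (exp u - 1 - u * exp u) / (exp u - 1)^2"

lemma pf_deriv:
  fixes u :: real assumes "u > 0"
  shows "DERIV pf u :> exp u * (exp u * (u - 2) + u + 2) / (exp u - 1)^3"
proof -
  have e: "exp u - 1 > 0" using assms by simp
  have "DERIV pf u :> ((exp u - (exp u + u * exp u)) * (exp u - 1)^2 - (exp u - 1 - u * exp u) * (2 * (exp u - 1) * exp u)) / ((exp u - 1)^2)^2"
    unfolding pf_def using e
    by (auto intro!: derivative_eq_intros simp: power2_eq_square)
  moreover have "((exp u - (exp u + u * exp u)) * (exp u - 1)^2 - (exp u - 1 - u * exp u) * (2 * (exp u - 1) * exp u)) / ((exp u - 1)^2)^2
     = exp u * (exp u * (u - 2) + u + 2) / (exp u - 1)^3"
  proof -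
    have "\<And>E::real. E - 1 \<noteq> 0 \<Longrightarrow> ((E - (E + u * E)) * (E - 1)^2 - (E - 1 - u * E) * (2 * (E - 1) * E)) / ((E - 1)^2)^2
     = E * (E * (u - 2) + u + 2) / (E - 1)^3"
      by (simp add: divide_simps) algebra
    thus ?thesis using e by simp
  qed
  ultimately show ?thesis by simp
qed

lemma pf_mono:
  fixes u v :: real assumes "0 < u" "u \<le> v"
  shows "pf u \<le> pf v"
proof (rule DERIV_nonneg_imp_nondecreasing[OF assms(2)])
  fix x assume "u \<le> x" "x \<le> v"
  hence x: "x > 0" using assms by simp
  have "exp x * (exp x * (x - 2) + x + 2) / (exp x - 1)^3 \<ge> 0"
    using kfun_nonneg[of x] x by (intro divide_nonneg_nonneg mult_nonneg_nonneg) auto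
  with pf_deriv[OF x] show "\<exists>y. DERIV pf x :> y \<and> y \<ge> 0" by blast
qed

lemma pf_nonpos:
  fixes u :: real assumes "0 < u"
  shows "pf u \<le> 0"
proof -
  have "exp (-u) \<ge> 1 - u" using exp_ge_add_one_self[of "-u"] by simp
  hence "exp u * exp (-u) \<ge> exp u * (1 - u)" by (simp add: mult_left_mono)
  hence "1 \<ge> exp u * (1 - u)" by (simp add: exp_minus)
  hence "exp u - 1 - u * exp u \<le> 0" by (simp add: algebra_simps)
  thus ?thesis unfolding pf_def by (simp add: divide_nonpos_nonneg)
qed

definition gf :: "real \<Rightarrow> real \<Rightarrow> real" where
  "gf t s = s / (exp (t * s) - 1)"

lemma gf_deriv:
  fixes t s :: real assumes "t > 0" "s > 0"
  shows "DERIV (gf t) s :> pf (t * s)"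
proof -
  have e: "exp (t * s) - 1 > 0" using assms by simp
  have "DERIV (gf t) s :> (1 * (exp (t * s) - 1) - s * (exp (t * s) * t)) / (exp (t * s) - 1)^2"
    unfolding gf_def using e
    by (auto intro!: derivative_eq_intros simp: power2_eq_square)
  moreover have "(1 * (exp (t * s) - 1) - s * (exp (t * s) * t)) / (exp (t * s) - 1)^2 = pf (t * s)"
    unfolding pf_def by (simp add: algebra_simps)
  ultimately show ?thesis by simp
qed

lemma gf_tangent:
  fixes t a b :: real assumes "t > 0" "a > 0" "b > 0"
  shows "gf t b \<ge> gf t a + pf (t * a) * (b - a)"
proof (cases a b rule: linorder_cases)
  case less
  obtain z where z: "a < z" "z < b" "gf t b - gf t a = (b - a) * pf (t * z)"
    using MVT2[OF less, of "gf t" "\<lambda>s. pf (t * s)"] gf_deriv assms by force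
  have "pf (t * a) \<le> pf (t * z)" using z assms by (intro pf_mono) auto
  hence "pf (t * a) * (b - a) \<le> pf (t * z) * (b - a)" using less by (intro mult_right_mono) auto
  with z show ?thesis by (simp add: algebra_simps)
next
  case equal thus ?thesis by simp
next
  case greater
  obtain z where z: "b < z" "z < a" "gf t a - gf t b = (a - b) * pf (t * z)"
    using MVT2[OF greater, of "gf t" "\<lambda>s. pf (t * s)"] gf_deriv assms by force
  have "pf (t * z) \<le> pf (t * a)" using z assms by (intro pf_mono) auto
  hence "pf (t * z) * (a - b) \<le> pf (t * a) * (a - b)" using greater by (intro mult_right_mono) auto
  with z show ?thesis by (simp add: algebra_simps)
qed



lemma abel_ineq:
  fixes c d :: "nat \<Rightarrow> real"
  assumes "\<And>i. i < m \<Longrightarrow> c i \<le> c (Suc i)"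
    and "\<And>k. k \<le> Suc m \<Longrightarrow> 0 \<le> (\<Sum>i<k. d i)"
  shows "(\<Sum>i<Suc m. c i * d i) \<le> c m * (\<Sum>i<Suc m. d i)"
  using assms
proof (induction m)
  case 0 thus ?case by simp
next
  case (Suc m)
  have ih: "(\<Sum>i<Suc m. c i * d i) \<le> c m * (\<Sum>i<Suc m. d i)"
    using Suc.prems by (intro Suc.IH) auto
  have "c m * (\<Sum>i<Suc m. d i) \<le> c (Suc m) * (\<Sum>i<Suc m. d i)"
    using Suc.prems(1)[of m] Suc.prems(2)[of "Suc m"] by (intro mult_right_mono) auto
  with ih have "(\<Sum>i<Suc (Suc m). c i * d i) \<le> c (Suc m) * (\<Sum>i<Suc m. d i) + c (Suc m) * d (Suc m)"
    by simp
  thus ?case by (simp add: algebra_simps)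
qed

lemma sum_list_map_sort: "sum_list (map (f :: _ \<Rightarrow> real) (sort xs)) = sum_list (map f xs)"
proof -
  have "sum_list (map f (sort xs)) = sum_mset (mset (map f (sort xs)))" by (simp only: sum_mset_sum_list)
  also have "\<dots> = sum_mset (mset (map f xs))" by (simp only: mset_map mset_sort)
  also have "\<dots> = sum_list (map f xs)" by (simp only: sum_mset_sum_list)
  finally show ?thesis .
qed

lemma sum_incr_rearr:
  "(\<Sum>i<n. (f :: real \<Rightarrow> real) (a i)) = (\<Sum>i<n. f (incr_rearr n a ! i))"
proof -
  have "(\<Sum>i<n. f (a i)) = sum_list (map f (map a [0..<n]))"
    by (simp add: sum_list_sum_nth atLeast0LessThan)
  also have "\<dots> = sum_list (map f (incr_rearr n a))"
    unfolding incr_rearr_def by (rule sum_list_map_sort[symmetric])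
  also have "\<dots> = (\<Sum>i<n. f (incr_rearr n a ! i))"
    by (simp add: sum_list_sum_nth atLeast0LessThan incr_rearr_def)
  finally show ?thesis .
qed

lemma incr_rearr_props:
  shows "length (incr_rearr n a) = n" "sorted (incr_rearr n a)"
    "set (incr_rearr n a) = a ` {..<n}"
  unfolding incr_rearr_def by auto

lemma maj_gf:
  fixes a b :: "nat \<Rightarrow> real" and t :: real
  assumes t: "t > 0" and wm: "weak_supmaj n a b"
    and apos: "\<And>i. i < n \<Longrightarrow> a i > 0" and bpos: "\<And>i. i < n \<Longrightarrow> b i > 0"
  shows "(\<Sum>i<n. gf t (a i)) \<le> (\<Sum>i<n. gf t (b i))"
proof (cases n)
  case 0 thus ?thesis by simp
next
  case (Suc m)
  define A where "A = incr_rearr n a"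
  define B where "B = incr_rearr n b"
  have lA: "length A = n" and lB: "length B = n" unfolding A_def B_def by (simp_all add: incr_rearr_props)
  have sA: "sorted A" unfolding A_def by (simp add: incr_rearr_props)
  have Apos: "A ! i > 0" if "i < n" for i
  proof -
    have "A ! i \<in> set A" using that lA by simp
    thus ?thesis using apos unfolding A_def incr_rearr_props by auto
  qed
  have Bpos: "B ! i > 0" if "i < n" for i
  proof -
    have "B ! i \<in> set B" using that lB by simp
    thus ?thesis using bpos unfolding B_def incr_rearr_props by auto
  qed
  define c where "c i = pf (t * A ! i)" for i
  define d where "d i = A ! i - B ! i" for i
  have takesum: "sum_list (take k xs) = (\<Sum>i<k. xs ! i)" if "k \<le> length xs" for k and xs :: "real list"
    using that by (simp add: sum_list_sum_nth atLeast0LessThan min_def)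
  have c_mono: "c i \<le> c (Suc i)" if "i < m" for i
  proof -
    have "A ! i \<le> A ! Suc i" using that Suc lA by (intro sorted_nth_mono[OF sA]) auto
    hence "t * A ! i \<le> t * A ! Suc i" using t by simp
    moreover have "0 < t * A ! i" using Apos[of i] that Suc t by simp
    ultimately show ?thesis unfolding c_def by (rule pf_mono[rotated])
  qed
  have D: "0 \<le> (\<Sum>i<k. d i)" if "k \<le> Suc m" for k
  proof (cases "k = 0")
    case True thus ?thesis by simp
  next
    case False
    hence "k \<in> {1..n}" using that Suc by auto
    hence "sum_list (take k A) \<ge> sum_list (take k B)" using wm unfolding weak_supmaj_def A_def B_def by blast
    moreover have "sum_list (take k A) = (\<Sum>i<k. A ! i)" "sum_list (take k B) = (\<Sum>i<k. B ! i)"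
      using that Suc lA lB by (simp_all add: takesum)
    ultimately show ?thesis unfolding d_def by (simp add: sum_subtractf)
  qed
  have "(\<Sum>i<n. gf t (A ! i)) - (\<Sum>i<n. gf t (B ! i)) = (\<Sum>i<n. gf t (A ! i) - gf t (B ! i))"
    by (simp add: sum_subtractf)
  also have "\<dots> \<le> (\<Sum>i<n. c i * d i)"
  proof (rule sum_mono)
    fix i assume "i \<in> {..<n}"
    hence "gf t (B ! i) \<ge> gf t (A ! i) + c i * (B ! i - A ! i)"
      unfolding c_def using Apos Bpos t by (intro gf_tangent) auto
    thus "gf t (A ! i) - gf t (B ! i) \<le> c i * d i" unfolding d_def by (simp add: algebra_simps)
  qed
  also have "\<dots> \<le> c m * (\<Sum>i<Suc m. d i)"
    unfolding Suc by (rule abel_ineq[of m c d, OF c_mono D])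
  also have "\<dots> \<le> 0"
  proof -
    have "c m \<le> 0" unfolding c_def using Apos[of m] Suc t by (intro pf_nonpos) auto
    thus ?thesis using D[of "Suc m"] by (simp add: mult_nonpos_nonneg)
  qed
  finally have "(\<Sum>i<n. gf t (A ! i)) \<le> (\<Sum>i<n. gf t (B ! i))" by simp
  thus ?thesis
    using sum_incr_rearr[of "gf t" a n] sum_incr_rearr[of "gf t" b n] unfolding A_def B_def by linarith
qed



lemma lterm_deriv:
  fixes c t :: real assumes "c > 0" "t > 0"
  shows "DERIV (\<lambda>t. ln (1 - exp (-(c * t)))) t :> gf t c"
proof -
  have e1: "exp (-(c * t)) < 1" using assms by simp
  have "DERIV (\<lambda>t. ln (1 - exp (-(c * t)))) t :> (- (exp (-(c * t)) * (- c))) / (1 - exp (-(c * t)))"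
    using e1 by (auto intro!: derivative_eq_intros simp: field_simps)
  moreover have "(- (exp (-(c * t)) * (- c))) / (1 - exp (-(c * t))) = gf t c"
  proof -
    have em: "exp (-(c * t)) = 1 / exp (t * c)" by (simp add: exp_minus mult.commute divide_inverse)
    have g: "(- (1 / E * (- c))) / (1 - 1 / E) = c / (E - 1)" if "E > 1" for E :: real
      using that by (simp add: field_simps)
    have "exp (t * c) > 1" using assms by simp
    thus ?thesis unfolding gf_def em using g by simp
  qed
  ultimately show ?thesis by simp
qed

definition Lf :: "nat \<Rightarrow> (nat \<Rightarrow> real) \<Rightarrow> (nat \<Rightarrow> real) \<Rightarrow> real \<Rightarrow> real" where
  "Lf n a b t = (\<Sum>i<n. ln (1 - exp (-(b i * t)))) - (\<Sum>i<n. ln (1 - exp (-(a i * t))))"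

lemma Lf_mono:
  assumes wm: "weak_supmaj n a b"
    and apos: "\<And>i. i < n \<Longrightarrow> a i > 0" and bpos: "\<And>i. i < n \<Longrightarrow> b i > 0"
    and "0 < s" "s \<le> u"
  shows "Lf n a b s \<le> Lf n a b u"
proof (rule DERIV_nonneg_imp_nondecreasing[OF assms(5)])
  fix x assume x: "s \<le> x" "x \<le> u"
  hence xp: "x > 0" using assms by simp
  have "DERIV (Lf n a b) x :> (\<Sum>i<n. gf x (b i)) - (\<Sum>i<n. gf x (a i))"
    unfolding Lf_def
    by (intro derivative_intros lterm_deriv) (auto simp: apos bpos xp)
  moreover have "(\<Sum>i<n. gf x (b i)) - (\<Sum>i<n. gf x (a i)) \<ge> 0"
    using maj_gf[OF xp wm apos bpos] by simp
  ultimately show "\<exists>y. DERIV (Lf n a b) x :> y \<and> y \<ge> 0" by blast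
qed

lemma ratio_eq:
  assumes "t > 0" and apos: "\<And>i. i < n \<Longrightarrow> a i > 0" and bpos: "\<And>i. i < n \<Longrightarrow> b i > 0"
  shows "(\<Prod>i<n. 1 - exp (-(b i * t))) / (\<Prod>i<n. 1 - exp (-(a i * t))) = exp (Lf n a b t)"
proof -
  have pos: "1 - exp (-(c * t)) > 0" if "c > 0" for c
    using that assms(1) by simp
  have pa: "(\<Prod>i<n. 1 - exp (-(a i * t))) = exp (\<Sum>i<n. ln (1 - exp (-(a i * t))))"
    by (subst exp_sum) (auto intro!: prod.cong exp_ln[symmetric] pos apos)
  have pb: "(\<Prod>i<n. 1 - exp (-(b i * t))) = exp (\<Sum>i<n. ln (1 - exp (-(b i * t))))"
    by (subst exp_sum) (auto intro!: prod.cong exp_ln[symmetric] pos bpos)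
  show ?thesis unfolding pa pb Lf_def by (simp add: exp_diff)
qed



lemma cdf_max_formula:
  fixes M :: "'a measure" and X :: "nat \<Rightarrow> 'a \<Rightarrow> real" and \<alpha> :: "nat \<Rightarrow> real"
  assumes n: "n \<ge> 1" and th: "\<theta> > 0" and P: "prob_space M"
    and ind: "prob_space.indep_vars M (\<lambda>_. borel) X {..<n}"
    and apos: "\<And>i. i < n \<Longrightarrow> \<alpha> i > 0"
    and tail: "\<And>i x. i < n \<Longrightarrow> x > 0 \<Longrightarrow>
           measure M {\<omega> \<in> space M. X i \<omega> > x} = (1 + x / \<theta>) powr (- \<alpha> i)"
  shows "x > 0 \<Longrightarrow> cdf_of M (max_os n X) x = (\<Prod>i<n. 1 - exp (-(\<alpha> i * ln (1 + x / \<theta>))))"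
    and "x \<le> 0 \<Longrightarrow> cdf_of M (max_os n X) x = 0"
proof -
  interpret prob_space M by (rule P)
  have rv: "X i \<in> borel_measurable M" if "i < n" for i
    using ind that unfolding indep_vars_def2 by auto
  have cdf_i: "measure M {\<omega> \<in> space M. X i \<omega> \<le> y} = 1 - measure M {\<omega> \<in> space M. X i \<omega> > y}"
    if "i < n" for i y
  proof -
    have "{\<omega> \<in> space M. X i \<omega> \<le> y} = space M - {\<omega> \<in> space M. X i \<omega> > y}" by auto
    moreover have "{\<omega> \<in> space M. X i \<omega> > y} \<in> events" using rv[OF that] by measurable
    ultimately show ?thesis by (simp add: prob_compl)
  qed
  have cdfprod: "cdf_of M (max_os n X) y = (\<Prod>i<n. measure M {\<omega> \<in> space M. X i \<omega> \<le> y})" for y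
  proof -
    have ev: "indep_events (\<lambda>i. {\<omega> \<in> space M. X i \<omega> \<le> y}) {..<n}"
      by (rule indep_eventsI_indep_vars[OF ind]) auto
    have eq: "{\<omega> \<in> space M. max_os n X \<omega> \<le> y} = (\<Inter>i\<in>{..<n}. {\<omega> \<in> space M. X i \<omega> \<le> y})"
    proof -
      have ne: "{..<n} \<noteq> {}" using n by (auto simp: lessThan_empty_iff)
      show ?thesis using ne unfolding max_os_def by (auto simp: Max_le_iff)
    qed
    show ?thesis unfolding cdf_of_def eq using ev n unfolding indep_events_def by (auto simp: lessThan_empty_iff)
  qed
  show "x > 0 \<Longrightarrow> cdf_of M (max_os n X) x = (\<Prod>i<n. 1 - exp (-(\<alpha> i * ln (1 + x / \<theta>))))"
  proof -
    assume x: "x > 0"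
    have "x / \<theta> > 0" using x th by simp
    hence "1 + x / \<theta> > 0" by linarith
    thus ?thesis unfolding cdfprod using x
      by (intro prod.cong refl) (simp add: cdf_i tail powr_def)
  qed
  show "x \<le> 0 \<Longrightarrow> cdf_of M (max_os n X) x = 0"
  proof -
    assume x: "x \<le> 0"
    have n0: "0 < n" using n by simp
    let ?f = "\<lambda>y. 1 - (1 + y / \<theta>) powr (- \<alpha> 0)"
    have bound: "measure M {\<omega> \<in> space M. X 0 \<omega> \<le> x} \<le> ?f y" if "y > 0" for y
    proof -
      have "measure M {\<omega> \<in> space M. X 0 \<omega> \<le> x} \<le> measure M {\<omega> \<in> space M. X 0 \<omega> \<le> y}"
        using x that rv[OF n0] by (intro finite_measure_mono) (auto, measurable)
      also have "\<dots> = ?f y" using cdf_i[OF n0] tail[OF n0 that] by simp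
      finally show ?thesis .
    qed
    have lim: "(?f \<longlongrightarrow> ?f 0) (at_right 0)"
      using th by (intro tendsto_intros continuous_on_tendsto_compose) (auto intro!: tendsto_eq_intros)
    have "?f 0 = 0" by simp
    with lim have lim0: "(?f \<longlongrightarrow> 0) (at_right 0)" by simp
    have "measure M {\<omega> \<in> space M. X 0 \<omega> \<le> x} \<le> 0"
      by (rule tendsto_le[OF trivial_limit_at_right_real lim0 tendsto_const])
         (rule eventually_mono[OF eventually_at_right_less[of "0::real"] bound])
    hence z: "measure M {\<omega> \<in> space M. X 0 \<omega> \<le> x} = 0" using measure_nonneg[of M] by (meson order.antisym)
    show ?thesis unfolding cdfprod using z n0 by (intro prod_zero) auto
  qed
qed



theorem theorem6:
  fixes M :: "'a measure" and N :: "'b measure"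
    and X :: "nat \<Rightarrow> 'a \<Rightarrow> real" and Y :: "nat \<Rightarrow> 'b \<Rightarrow> real"
    and \<alpha> \<alpha>s :: "nat \<Rightarrow> real" and \<theta> :: real and n :: nat
  assumes "n \<ge> 1" and "\<theta> > 0"
    and "prob_space M" and "prob_space N"
    and "prob_space.indep_vars M (\<lambda>_. borel) X {..<n}"
    and "prob_space.indep_vars N (\<lambda>_. borel) Y {..<n}"
    and "\<And>i. i < n \<Longrightarrow> \<alpha> i > 0" and "\<And>i. i < n \<Longrightarrow> \<alpha>s i > 0"
    and "\<And>i x. i < n \<Longrightarrow> x > 0 \<Longrightarrow>
           measure M {\<omega> \<in> space M. X i \<omega> > x} = (1 + x / \<theta>) powr (- \<alpha> i)"
    and "\<And>i x. i < n \<Longrightarrow> x > 0 \<Longrightarrow>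
           measure N {\<omega> \<in> space N. Y i \<omega> > x} = (1 + x / \<theta>) powr (- \<alpha>s i)"
    and "weak_supmaj n \<alpha> \<alpha>s"
  shows "rh_le M (max_os n X) N (max_os n Y)"
proof -
  have FX1: "cdf_of M (max_os n X) x = (\<Prod>i<n. 1 - exp (-(\<alpha> i * ln (1 + x / \<theta>))))" if "x > 0" for x
    by (rule cdf_max_formula(1)[where M=M and X=X and \<alpha>=\<alpha> and \<theta>=\<theta>]) (use assms that in auto)
  have FX2: "cdf_of M (max_os n X) x = 0" if "x \<le> 0" for x
    by (rule cdf_max_formula(2)[where M=M and X=X and \<alpha>=\<alpha> and \<theta>=\<theta>]) (use assms that in auto)
  have GY1: "cdf_of N (max_os n Y) x = (\<Prod>i<n. 1 - exp (-(\<alpha>s i * ln (1 + x / \<theta>))))" if "x > 0" for x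
    by (rule cdf_max_formula(1)[where M=N and X=Y and \<alpha>=\<alpha>s and \<theta>=\<theta>]) (use assms that in auto)
  define tt where "tt x = ln (1 + x / \<theta>)" for x
  have pos: "x > 0" if "0 < cdf_of M (max_os n X) x" for x
  proof (rule ccontr)
    assume "\<not> x > 0"
    hence "cdf_of M (max_os n X) x = 0" using FX2 by simp
    with that show False by simp
  qed
  have ttpos: "tt x > 0" if "x > 0" for x
  proof -
    have "x / \<theta> > 0" using that assms(2) by simp
    thus ?thesis unfolding tt_def by simp
  qed
  have ratio: "cdf_of N (max_os n Y) x / cdf_of M (max_os n X) x = exp (Lf n \<alpha> \<alpha>s (tt x))"
    if "x > 0" for x
    unfolding FX1[OF that] GY1[OF that] tt_def[symmetric]
    by (rule ratio_eq[OF ttpos[OF that] assms(7,8)])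
  show ?thesis unfolding rh_le_def
  proof (rule mono_onI)
    fix x y assume x: "x \<in> {x. 0 < cdf_of M (max_os n X) x \<and> 0 < cdf_of N (max_os n Y) x}"
      and y: "y \<in> {x. 0 < cdf_of M (max_os n X) x \<and> 0 < cdf_of N (max_os n Y) x}"
      and xy: "x \<le> y"
    have xp: "x > 0" using x pos by auto
    hence yp: "y > 0" using xy by simp
    have d1: "x / \<theta> \<le> y / \<theta>" using xy assms(2) by (simp add: divide_right_mono)
    have d2: "x / \<theta> > 0" using xp assms(2) by simp
    have "tt x \<le> tt y" unfolding tt_def using d1 d2 by (subst ln_le_cancel_iff) auto
    hence "Lf n \<alpha> \<alpha>s (tt x) \<le> Lf n \<alpha> \<alpha>s (tt y)"
      by (intro Lf_mono[OF assms(11) assms(7,8)] ttpos xp)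
    thus "cdf_of N (max_os n Y) x / cdf_of M (max_os n X) x \<le> cdf_of N (max_os n Y) y / cdf_of M (max_os n X) y"
      unfolding ratio[OF xp] ratio[OF yp] by simp
  qed
qed


end
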